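(* Let $x$ be a $\theta$-cyclic point and let $U\subseteq V_n$ be a minimal critical cut of $G_x$, i.e. $U$ is a critical cut and no $S\subsetneq U$ is a critical cut of $G_x$. Then $G_x^U$ (with the point $x^U$) contains no critical cut.
   Context: $\mathrm{SUBT}(K_n)=\{x\in[0,1]^{E_n}: x(\delta(\{i\}))=2\ \forall i,\ x(\delta(U))\ge2\ \forall\,\emptyset\ne U\subsetneq V_n\}$ where $K_n$ is the complete graph on $V_n=\{1,\ldots,n\}$ with edge set $E_n$ and $\delta(U)$ is the set of edges with exactly one endpoint in $U$. $G_x=(V_n,E_x)$, $E_x=\{e:x_e>0\}$. A $\theta$-cyclic point ($0<\theta\le\frac12$) is $x\in\mathrm{SUBT}(K_n)\cap\{0,\theta,1-\theta,1\}^{E_n}$ with $G_x$ of maximum degree at most 3 and every vertex incident to an edge of $x$-value 1. A cut $U$ of a graph with vertex set $V$ is proper if $|U|\ge2$ and $|V\setminus U|\ge2$. A critical cut is a proper cut $U$ with $|\delta(U)|=3$, exactly one edge of $\delta(U)$ of $x$-value 1, and the edges of $\delta(U)$ having pairwise distinct endpoints in $U$ and pairwise distinct endpoints outside $U$. $G_x^U$ is obtained from $G_x$ by identifying all vertices of $V_n\setminus U$ into a single vertex $v_{\overline U}$ and deleting loops; $x^U$ assigns each edge of $G_x^U$ its $x$-value. *)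

theory Defs
  imports Complex_Main
begin

definition Vn :: "nat \<Rightarrow> nat set" where
  "Vn n = {1..n}"

definition En :: "nat \<Rightarrow> nat set set" where
  "En n = {{i, j} | i j. i \<in> Vn n \<and> j \<in> Vn n \<and> i \<noteq> j}"

definition deltaK :: "nat \<Rightarrow> nat set \<Rightarrow> nat set set" where
  "deltaK n U = {e \<in> En n. card (e \<inter> U) = 1}"

definition SUBT :: "nat \<Rightarrow> (nat set \<Rightarrow> real) set" where
  "SUBT n = {x. (\<forall>e \<in> En n. 0 \<le> x e \<and> x e \<le> 1)
              \<and> (\<forall>i \<in> Vn n. sum x (deltaK n {i}) = 2)
              \<and> (\<forall>U. U \<noteq> {} \<and> U \<subset> Vn n \<longrightarrow> sum x (deltaK n U) \<ge> 2)}"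

definition Ex :: "nat \<Rightarrow> (nat set \<Rightarrow> real) \<Rightarrow> nat set set" where
  "Ex n x = {e \<in> En n. x e > 0}"

definition theta_cyclic :: "nat \<Rightarrow> real \<Rightarrow> (nat set \<Rightarrow> real) \<Rightarrow> bool" where
  "theta_cyclic n \<theta> x \<longleftrightarrow>
     0 < \<theta> \<and> \<theta> \<le> 1/2 \<and> x \<in> SUBT n
     \<and> (\<forall>e \<in> En n. x e \<in> {0, \<theta>, 1 - \<theta>, 1})
     \<and> (\<forall>i \<in> Vn n. card {e \<in> Ex n x. i \<in> e} \<le> 3)
     \<and> (\<forall>i \<in> Vn n. \<exists>e \<in> En n. i \<in> e \<and> x e = 1)"

text \<open>A (loopless) multigraph is given by a vertex set V, an abstract edge set F and an
  endpoint map ep assigning to each edge its set of (two) endpoints; w is an edge weighting.\<close>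

definition cut_edges :: "'e set \<Rightarrow> ('e \<Rightarrow> 'v set) \<Rightarrow> 'v set \<Rightarrow> 'e set" where
  "cut_edges F ep S = {e \<in> F. ep e \<inter> S \<noteq> {} \<and> ep e - S \<noteq> {}}"

definition proper_cut :: "'v set \<Rightarrow> 'v set \<Rightarrow> bool" where
  "proper_cut V S \<longleftrightarrow> S \<subseteq> V \<and> card S \<ge> 2 \<and> card (V - S) \<ge> 2"

definition critical_cut ::
  "'v set \<Rightarrow> 'e set \<Rightarrow> ('e \<Rightarrow> 'v set) \<Rightarrow> ('e \<Rightarrow> real) \<Rightarrow> 'v set \<Rightarrow> bool" where
  "critical_cut V F ep w S \<longleftrightarrow>
     proper_cut V S
     \<and> card (cut_edges F ep S) = 3
     \<and> card {e \<in> cut_edges F ep S. w e = 1} = 1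
     \<and> (\<forall>e \<in> cut_edges F ep S. \<forall>f \<in> cut_edges F ep S. e \<noteq> f \<longrightarrow>
           ep e \<inter> ep f \<inter> S = {} \<and> (ep e \<inter> ep f) - S = {})"

text \<open>Critical cut of G_x (vertices V_n, edges E_x, an edge is its own endpoint set).\<close>
definition critical_cut_Gx :: "nat \<Rightarrow> (nat set \<Rightarrow> real) \<Rightarrow> nat set \<Rightarrow> bool" where
  "critical_cut_Gx n x S = critical_cut (Vn n) (Ex n x) id x S"

text \<open>Vertices of G_x^U: Some u for u in U, and None for the contracted vertex v_{bar U}.\<close>
definition contr_map :: "nat set \<Rightarrow> nat \<Rightarrow> nat option" where
  "contr_map U v = (if v \<in> U then Some v else None)"

definition contr_V :: "nat set \<Rightarrow> nat option set" where
  "contr_V U = Some ` U \<union> {None}"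

text \<open>Edges of G_x^U: edges of G_x with at least one endpoint in U (edges with both ends
  outside U become loops and are deleted); parallel edges are kept.\<close>
definition contr_E :: "nat \<Rightarrow> (nat set \<Rightarrow> real) \<Rightarrow> nat set \<Rightarrow> nat set set" where
  "contr_E n x U = {e \<in> Ex n x. e \<inter> U \<noteq> {}}"

definition contr_ep :: "nat set \<Rightarrow> nat set \<Rightarrow> nat option set" where
  "contr_ep U e = contr_map U ` e"

definition critical_cut_GxU :: "nat \<Rightarrow> (nat set \<Rightarrow> real) \<Rightarrow> nat set \<Rightarrow> nat option set \<Rightarrow> bool" where
  "critical_cut_GxU n x U S = critical_cut (contr_V U) (contr_E n x U) (contr_ep U) x S"

end

theory Submission
  imports Defs
begin

lemma crit_disj:
  assumes "critical_cut V F ep w S" "e \<in> cut_edges F ep S" "f \<in> cut_edges F ep S" "e \<noteq> f"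
  shows "ep e \<inter> ep f = {}"
  using assms unfolding critical_cut_def by blast

lemma cut_edges_compl:
  assumes "\<forall>e\<in>F. ep e \<subseteq> V"
  shows "cut_edges F ep (V - S) = cut_edges F ep S"
  using assms unfolding cut_edges_def by blast

lemma crit_compl:
  assumes "critical_cut V F ep w S" "\<forall>e\<in>F. ep e \<subseteq> V"
  shows "critical_cut V F ep w (V - S)"
proof -
  have pc: "proper_cut V S" using assms(1) unfolding critical_cut_def by blast
  have "S \<subseteq> V" using pc unfolding proper_cut_def by blast
  hence "V - (V - S) = S" by blast
  hence pc2: "proper_cut V (V - S)" using pc unfolding proper_cut_def by auto
  have ce: "cut_edges F ep (V - S) = cut_edges F ep S" using cut_edges_compl[OF assms(2)] .
  have c3: "card (cut_edges F ep S) = 3" "card {e \<in> cut_edges F ep S. w e = 1} = 1"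
    using assms(1) unfolding critical_cut_def by blast+
  have d: "\<forall>e \<in> cut_edges F ep S. \<forall>f \<in> cut_edges F ep S. e \<noteq> f \<longrightarrow>
           ep e \<inter> ep f \<inter> (V - S) = {} \<and> (ep e \<inter> ep f) - (V - S) = {}"
    using crit_disj[OF assms(1)] by blast
  show ?thesis unfolding critical_cut_def ce using pc2 c3 d by blast
qed

lemma cm_in: "T \<subseteq> U \<Longrightarrow> (contr_map U v \<in> Some ` T) = (v \<in> T)"
  unfolding contr_map_def by auto

theorem mainTheorem11:
  fixes n :: nat and \<theta> :: real and x :: "nat set \<Rightarrow> real" and U :: "nat set"
  assumes "theta_cyclic n \<theta> x"
    and "critical_cut_Gx n x U"
    and "\<forall>S. S \<subset> U \<longrightarrow> \<not> critical_cut_Gx n x S"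
  shows "\<not> (\<exists>S. critical_cut_GxU n x U S)"
proof
  assume "\<exists>S. critical_cut_GxU n x U S"
  then obtain S where S: "critical_cut (contr_V U) (contr_E n x U) (contr_ep U) x S"
    unfolding critical_cut_GxU_def by blast
  have pcU: "proper_cut (Vn n) U" using assms(2) unfolding critical_cut_Gx_def critical_cut_def by blast
  have UV: "U \<subseteq> Vn n" and cU: "card (Vn n - U) \<ge> 2" using pcU unfolding proper_cut_def by auto
  have finV: "finite (Vn n)" unfolding Vn_def by simp
  have epV: "\<forall>e\<in>contr_E n x U. contr_ep U e \<subseteq> contr_V U"
    unfolding contr_ep_def contr_V_def contr_map_def by auto
  define S' where "S' = (if None \<in> S then contr_V U - S else S)"
  have S': "critical_cut (contr_V U) (contr_E n x U) (contr_ep U) x S'"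
    unfolding S'_def using S crit_compl[OF S epV] by simp
  have nN: "None \<notin> S'" unfolding S'_def by (auto simp: contr_V_def)
  have pcS: "proper_cut (contr_V U) S'" using S' unfolding critical_cut_def by blast
  define T where "T = Some -` S'"
  have allS: "\<forall>y\<in>S'. \<exists>t. y = Some t" using nN by (metis option.exhaust)
  have S'T: "S' = Some ` T" unfolding T_def using allS by force
  have TU: "T \<subseteq> U" using pcS unfolding S'T proper_cut_def contr_V_def by auto
  have cT: "card T \<ge> 2" using pcS unfolding S'T proper_cut_def
    by (simp add: card_image)
  have "contr_V U - S' = insert None (Some ` (U - T))"
    unfolding S'T contr_V_def by auto
  moreover have "card (contr_V U - S') \<ge> 2" using pcS unfolding proper_cut_def by blast
  ultimately have "U - T \<noteq> {}"
  proof -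
    assume a: "contr_V U - S' = insert None (Some ` (U - T))" "card (contr_V U - S') \<ge> 2"
    show ?thesis
    proof
      assume "U - T = {}"
      hence "contr_V U - S' = {None}" using a(1) by (metis image_empty)
      thus False using a(2) by simp
    qed
  qed
  hence TsU: "T \<subset> U" using TU by blast
  have "Vn n - U \<subseteq> Vn n - T" using TU by blast
  hence "card (Vn n - T) \<ge> 2" using cU card_mono[of "Vn n - T" "Vn n - U"] finV by auto
  hence pcT: "proper_cut (Vn n) T" using cT TU UV unfolding proper_cut_def by auto
  have ce: "cut_edges (Ex n x) id T = cut_edges (contr_E n x U) (contr_ep U) S'"
  proof
    show "cut_edges (Ex n x) id T \<subseteq> cut_edges (contr_E n x U) (contr_ep U) S'"
    proof
      fix e assume e: "e \<in> cut_edges (Ex n x) id T"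
      then obtain a b where "a \<in> e" "a \<in> T" "b \<in> e" "b \<notin> T" "e \<in> Ex n x"
        unfolding cut_edges_def by auto
      have 1: "contr_map U a \<in> contr_map U ` e \<inter> Some ` T" using \<open>a \<in> e\<close> \<open>a \<in> T\<close> cm_in[OF TU] by blast
      have 2: "contr_map U b \<in> contr_map U ` e - Some ` T" using \<open>b \<in> e\<close> \<open>b \<notin> T\<close> cm_in[OF TU] by blast
      have 3: "e \<inter> U \<noteq> {}" using \<open>a \<in> e\<close> \<open>a \<in> T\<close> TU by blast
      show "e \<in> cut_edges (contr_E n x U) (contr_ep U) S'"
        unfolding cut_edges_def contr_E_def contr_ep_def S'T using 1 2 3 \<open>e \<in> Ex n x\<close> by blast
    qed
  next
    show "cut_edges (contr_E n x U) (contr_ep U) S' \<subseteq> cut_edges (Ex n x) id T"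
    proof
      fix e assume e: "e \<in> cut_edges (contr_E n x U) (contr_ep U) S'"
      hence "e \<in> Ex n x" "contr_map U ` e \<inter> Some ` T \<noteq> {}" "contr_map U ` e - Some ` T \<noteq> {}"
        unfolding cut_edges_def contr_E_def contr_ep_def S'T by auto
      thus "e \<in> cut_edges (Ex n x) id T"
        unfolding cut_edges_def using cm_in[OF TU] by auto
    qed
  qed
  have disj: "\<forall>e \<in> cut_edges (Ex n x) id T. \<forall>f \<in> cut_edges (Ex n x) id T. e \<noteq> f \<longrightarrow> e \<inter> f = {}"
  proof (intro ballI impI)
    fix e f assume "e \<in> cut_edges (Ex n x) id T" "f \<in> cut_edges (Ex n x) id T" "e \<noteq> f"
    hence "contr_ep U e \<inter> contr_ep U f = {}" using crit_disj[OF S'] ce by auto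
    thus "e \<inter> f = {}" unfolding contr_ep_def by blast
  qed
  have c3: "card (cut_edges (Ex n x) id T) = 3" "card {e \<in> cut_edges (Ex n x) id T. x e = 1} = 1"
    using S' unfolding critical_cut_def ce by blast+
  have d: "\<forall>e \<in> cut_edges (Ex n x) id T. \<forall>f \<in> cut_edges (Ex n x) id T. e \<noteq> f \<longrightarrow>
           id e \<inter> id f \<inter> T = {} \<and> (id e \<inter> id f) - T = {}"
    using disj by simp
  have "critical_cut_Gx n x T"
    unfolding critical_cut_Gx_def critical_cut_def
    using pcT c3 d by blast
  thus False using assms(3) TsU by blast
qed

end
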